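(* Let $\beta\in[0,\tfrac12)$ and let $u,v:\mathbb{T}_m\to\mathbb{R}$ be bounded functions such that $-\Delta_\beta u(x)\ge-\Delta_\beta v(x)$ for all $x\in\mathbb{T}_m$ and $\liminf_{x\to y}u(x)\ge\limsup_{x\to y}v(x)$ for every $y\in\partial\mathbb{T}_m$. Then $u\ge v$ on $\mathbb{T}_m$. Moreover, if $\beta>0$, then either $u>v$ on $\mathbb{T}_m$ or $u\equiv v$.
   Context: Tree: for an integer $m\ge2$, $\mathbb{T}_m$ has vertices the root $\emptyset$ and all finite sequences $(\emptyset,a_1,\dots,a_k)$, $a_i\in\{0,\dots,m-1\}$; $|x|$ is the level, successors of $x$ are $(x,i)$, $\hat x$ is the immediate predecessor of $x\ne\emptyset$. A branch is an infinite sequence $(x_n)_{n\ge0}$ with $x_0=\emptyset$ and $x_{n+1}$ a successor of $x_n$; $\partial\mathbb{T}_m$ is the set of branches; for $y=(x_n)$, $\liminf_{x\to y}u(x)=\liminf_n u(x_n)$ and $\limsup_{x\to y}v(x)=\limsup_n v(x_n)$. Operator: $p_\beta=1$ if $\beta=0$, $p_\beta=\beta/(1-\beta)$ if $\beta\in(0,1)$. $\Delta_\beta u(\emptyset)=\frac1m\sum_{i=0}^{m-1}u(\emptyset,i)-u(\emptyset)$ and, for $x\ne\emptyset$, $\Delta_\beta u(x)=\big(\beta u(\hat x)+\frac{1-\beta}{m}\sum_{i=0}^{m-1}u(x,i)-u(x)\big)p_\beta^{-|x|}$. *)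

theory Defs
  imports "HOL-Analysis.Analysis" "HOL-Library.Liminf_Limsup"
begin

text \<open>Vertices of the m-ary tree: the sequence (root, a1, ..., ak) is represented by the
 list [a1,...,ak] with all entries < m. The root is [], the successor (x,i) is x @ [i],
 the predecessor of x is butlast x and the level |x| is length x.\<close>

definition tree_vertices :: "nat \<Rightarrow> nat list set" where
  "tree_vertices m = {x. \<forall>a\<in>set x. a < m}"

definition is_branch :: "nat \<Rightarrow> (nat \<Rightarrow> nat list) \<Rightarrow> bool" where
  "is_branch m xs \<longleftrightarrow> xs 0 = [] \<and> (\<forall>n. \<exists>i<m. xs (Suc n) = xs n @ [i])"

definition p_beta :: "real \<Rightarrow> real" where
  "p_beta \<beta> = (if \<beta> = 0 then 1 else \<beta> / (1 - \<beta>))"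

definition tree_lap :: "nat \<Rightarrow> real \<Rightarrow> (nat list \<Rightarrow> real) \<Rightarrow> nat list \<Rightarrow> real" where
  "tree_lap m \<beta> u x =
    (if x = [] then (1 / real m) * (\<Sum>i<m. u [i]) - u []
     else (\<beta> * u (butlast x) + ((1 - \<beta>) / real m) * (\<Sum>i<m. u (x @ [i])) - u x)
          * (inverse (p_beta \<beta>)) ^ length x)"

definition bounded_on_tree :: "nat \<Rightarrow> (nat list \<Rightarrow> real) \<Rightarrow> bool" where
  "bounded_on_tree m u \<longleftrightarrow> (\<exists>C. \<forall>x\<in>tree_vertices m. \<bar>u x\<bar> \<le> C)"

end

theory Submission
  imports Defs
begin

lemma liminf_contra:
  fixes f g :: "nat \<Rightarrow> real"
  assumes bd: "\<And>n. \<bar>f n\<bar> \<le> C"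
    and ev: "eventually (\<lambda>n. g n \<ge> f n + d) sequentially"
    and d: "d > 0"
    and le: "liminf (\<lambda>n. ereal (f n)) \<ge> limsup (\<lambda>n. ereal (g n))"
  shows False
proof -
  let ?L = "liminf (\<lambda>n. ereal (f n))"
  have "ereal (-C) \<le> ?L"
    proof (rule Liminf_bounded, intro always_eventually allI)
    fix n show "ereal (-C) \<le> ereal (f n)" using bd[of n] by simp
  qed
  moreover have "?L \<le> limsup (\<lambda>n. ereal (f n))" by (rule Liminf_le_Limsup) simp
  moreover have "limsup (\<lambda>n. ereal (f n)) \<le> ereal C"
    proof (rule Limsup_bounded, intro always_eventually allI)
    fix n show "ereal (f n) \<le> ereal C" using bd[of n] by simp
  qed
  ultimately obtain l where l: "?L = ereal l" by (cases ?L) auto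
  have eq: "liminf (\<lambda>n. ereal (f n) + ereal d) = ?L + ereal d"
    by (rule Liminf_add_ereal_right) auto
  have "?L + ereal d = liminf (\<lambda>n. ereal (f n) + ereal d)" using eq by simp
  also have "liminf (\<lambda>n. ereal (f n) + ereal d) \<le> liminf (\<lambda>n. ereal (g n))"
    by (rule Liminf_mono) (use ev in \<open>auto elim!: eventually_mono\<close>)
  also have "\<dots> \<le> limsup (\<lambda>n. ereal (g n))" by (rule Liminf_le_Limsup) simp
  also have "\<dots> \<le> ?L" by (rule le)
  finally have "ereal l + ereal d \<le> ereal l" using l by simp
  thus False using d by simp
qed

lemma sum_avg_exists:
  fixes f :: "nat \<Rightarrow> real"
  assumes "m > 0" "(\<Sum>i<m. f i) \<ge> real m * a"
  shows "\<exists>i<m. f i \<ge> a"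
proof (rule ccontr)
  assume "\<not> ?thesis"
  hence "\<forall>i\<in>{..<m}. f i < a" by auto
  hence "(\<Sum>i<m. f i) < (\<Sum>i<m. a)" using assms(1) by (intro sum_strict_mono) auto
  thus False using assms(2) by simp
qed

lemma p_beta_pos: "0 \<le> \<beta> \<Longrightarrow> \<beta> < 1 \<Longrightarrow> p_beta \<beta> > 0"
  by (auto simp: p_beta_def)

lemma lap_root:
  assumes "tree_lap m \<beta> u [] \<le> tree_lap m \<beta> v []" "m > 0"
  shows "real m * (v [] - u []) \<le> (\<Sum>i<m. v [i] - u [i])"
proof -
  have "(1 / real m) * (\<Sum>i<m. u [i]) - u [] \<le> (1 / real m) * (\<Sum>i<m. v [i]) - v []"
    using assms(1) by (simp add: tree_lap_def)
  hence "(1 / real m) * (\<Sum>i<m. v [i] - u [i]) \<ge> v [] - u []"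
    by (simp add: sum_subtractf algebra_simps)
  thus ?thesis using assms(2) by (simp add: field_simps)
qed

lemma lap_nonroot:
  assumes "tree_lap m \<beta> u x \<le> tree_lap m \<beta> v x" "m > 0" "x \<noteq> []" "0 \<le> \<beta>" "\<beta> < 1"
  shows "v x - u x \<le> \<beta> * (v (butlast x) - u (butlast x))
          + ((1 - \<beta>) / real m) * (\<Sum>i<m. v (x @ [i]) - u (x @ [i]))"
proof -
  have k: "inverse (p_beta \<beta>) ^ length x > 0" using p_beta_pos[OF assms(4,5)] by simp
  have "(\<beta> * u (butlast x) + ((1 - \<beta>) / real m) * (\<Sum>i<m. u (x @ [i])) - u x)
        * (inverse (p_beta \<beta>)) ^ length x \<le>
        (\<beta> * v (butlast x) + ((1 - \<beta>) / real m) * (\<Sum>i<m. v (x @ [i])) - v x)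
        * (inverse (p_beta \<beta>)) ^ length x"
    using assms(1,3) by (simp add: tree_lap_def)
  hence "\<beta> * u (butlast x) + ((1 - \<beta>) / real m) * (\<Sum>i<m. u (x @ [i])) - u x \<le>
        \<beta> * v (butlast x) + ((1 - \<beta>) / real m) * (\<Sum>i<m. v (x @ [i])) - v x"
    using k mult_le_cancel_right_pos by blast
  thus ?thesis by (simp add: sum_subtractf algebra_simps)
qed

fun brn :: "(nat list \<Rightarrow> nat list) \<Rightarrow> nat list \<Rightarrow> nat \<Rightarrow> nat list" where
  "brn c y 0 = []"
| "brn c y (Suc n) = (if n < length y then brn c y n @ [y ! n] else c (brn c y n))"

lemma brn_take: "n \<le> length y \<Longrightarrow> brn c y n = take n y"
  by (induction n) (auto simp: take_Suc_conv_app_nth)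

theorem theorem2p2:
  fixes m :: nat and \<beta> :: real and u v :: "nat list \<Rightarrow> real"
  assumes "m \<ge> 2"
    and "0 \<le> \<beta>" and "\<beta> < 1/2"
    and "bounded_on_tree m u" and "bounded_on_tree m v"
    and "\<forall>x\<in>tree_vertices m. - tree_lap m \<beta> u x \<ge> - tree_lap m \<beta> v x"
    and "\<forall>xs. is_branch m xs \<longrightarrow>
           liminf (\<lambda>n. ereal (u (xs n))) \<ge> limsup (\<lambda>n. ereal (v (xs n)))"
  shows "(\<forall>x\<in>tree_vertices m. u x \<ge> v x) \<and>
         (\<beta> > 0 \<longrightarrow> (\<forall>x\<in>tree_vertices m. u x > v x) \<or> (\<forall>x\<in>tree_vertices m. u x = v x))"
proof -
  define w where "w x = v x - u x" for x
  have m0: "m > 0" using assms(1) by simp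
  have b1: "\<beta> < 1" using assms(3) by simp
  have tv_app: "x @ [i] \<in> tree_vertices m" if "x \<in> tree_vertices m" "i < m" for x i
    using that by (auto simp: tree_vertices_def)
  have tv_butlast: "butlast x \<in> tree_vertices m" if "x \<in> tree_vertices m" for x
    using that by (auto simp: tree_vertices_def dest: in_set_butlastD)
  have root: "real m * w [] \<le> (\<Sum>i<m. w [i])"
    using lap_root[where m=m and \<beta>=\<beta> and u=u and v=v] assms(6) m0 unfolding w_def by (auto simp: tree_vertices_def)
  have nonroot: "w x \<le> \<beta> * w (butlast x) + ((1 - \<beta>) / real m) * (\<Sum>i<m. w (x @ [i]))"
    if "x \<in> tree_vertices m" "x \<noteq> []" for x
    using lap_nonroot[where m=m and \<beta>=\<beta> and u=u and v=v and x=x] assms(6,2) b1 m0 that unfolding w_def by auto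
  define good where "good y \<longleftrightarrow> y \<in> tree_vertices m \<and> w y > 0 \<and> (y \<noteq> [] \<longrightarrow> w (butlast y) \<le> w y)" for y
  have step: "\<exists>i<m. w (y @ [i]) \<ge> w y" if "good y" for y
  proof (rule sum_avg_exists[OF m0])
    show "real m * w y \<le> (\<Sum>i<m. w (y @ [i]))"
    proof (cases "y = []")
      case True thus ?thesis using root by simp
    next
      case False
      let ?s = "\<Sum>i<m. w (y @ [i])"
      have "w y \<le> \<beta> * w (butlast y) + ((1 - \<beta>) / real m) * ?s"
        using nonroot that False unfolding good_def by auto
      also have "\<dots> \<le> \<beta> * w y + ((1 - \<beta>) / real m) * ?s"
        using that False assms(2) unfolding good_def by (auto intro: mult_left_mono)
      finally have "(1 - \<beta>) * w y \<le> (1 - \<beta>) * (?s / real m)" by (simp add: algebra_simps)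
      hence "w y \<le> ?s / real m" using b1 mult_left_le_imp_le[of "1 - \<beta>" "w y" "?s / real m"] by linarith
      thus ?thesis using m0 by (simp add: field_simps)
    qed
  qed
  have ex_good: "\<exists>y. good y" if "x \<in> tree_vertices m" "w x > 0" for x
    using that
  proof (induction x rule: rev_induct)
    case Nil thus ?case unfolding good_def by auto
  next
    case (snoc a xs)
    show ?case
    proof (cases "w xs \<le> w (xs @ [a])")
      case True thus ?thesis using snoc.prems unfolding good_def by (intro exI[of _ "xs @ [a]"]) auto
    next
      case False
      have "xs \<in> tree_vertices m" using snoc.prems by (auto simp: tree_vertices_def)
      thus ?thesis using snoc False by auto
    qed
  qed
  obtain Cu where Cu: "\<forall>x\<in>tree_vertices m. \<bar>u x\<bar> \<le> Cu" using assms(4) by (auto simp: bounded_on_tree_def)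
  have part1: "\<forall>x\<in>tree_vertices m. w x \<le> 0"
  proof (rule ccontr)
    assume "\<not> ?thesis"
    then obtain x where "x \<in> tree_vertices m" "w x > 0" by force
    then obtain y where y: "good y" using ex_good by blast
    define c where "c z = z @ [SOME i. i < m \<and> w (z @ [i]) \<ge> w z]" for z
    have c: "good (c z) \<and> w (c z) \<ge> w z \<and> (\<exists>i<m. c z = z @ [i])" if "good z" for z
    proof -
      have "\<exists>i. i < m \<and> w (z @ [i]) \<ge> w z" using step[OF that] by auto
      hence s: "(SOME i. i < m \<and> w (z @ [i]) \<ge> w z) < m \<and> w (c z) \<ge> w z"
        unfolding c_def by (rule someI_ex)
      thus ?thesis using that unfolding good_def c_def by (auto intro: tv_app)
    qed
    define xs where "xs = brn c y"
    have late: "good (xs n) \<and> w (xs n) \<ge> w y" if "n \<ge> length y" for n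
      using that
    proof (induction n rule: dec_induct)
      case base thus ?case using y brn_take[of "length y" y c] unfolding xs_def by simp
    next
      case (step n)
      thus ?case using c[of "xs n"] unfolding xs_def by auto
    qed
    have ytv: "y \<in> tree_vertices m" using y unfolding good_def by simp
    have br: "is_branch m xs"
      unfolding is_branch_def
    proof (intro conjI allI)
      show "xs 0 = []" unfolding xs_def by simp
      fix n
      show "\<exists>i<m. xs (Suc n) = xs n @ [i]"
      proof (cases "n < length y")
        case True
        have "y ! n < m" using ytv True by (auto simp: tree_vertices_def)
        thus ?thesis using True unfolding xs_def by auto
      next
        case False
        thus ?thesis using c[of "xs n"] late[of n] unfolding xs_def by auto
      qed
    qed
    have intree: "xs n \<in> tree_vertices m" for n
    proof (induction n)
      case 0 thus ?case using br by (simp add: is_branch_def tree_vertices_def)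
    next
      case (Suc n) thus ?case using br tv_app unfolding is_branch_def by metis
    qed
    show False
    proof (rule liminf_contra[where f = "\<lambda>n. u (xs n)" and g = "\<lambda>n. v (xs n)" and C = Cu and d = "w y"])
      show "\<bar>u (xs n)\<bar> \<le> Cu" for n using Cu intree by auto
      show "eventually (\<lambda>n. v (xs n) \<ge> u (xs n) + w y) sequentially"
        using late unfolding eventually_sequentially w_def by force
      show "w y > 0" using y unfolding good_def by simp
      show "liminf (\<lambda>n. ereal (u (xs n))) \<ge> limsup (\<lambda>n. ereal (v (xs n)))" using assms(7) br by blast
    qed
  qed
  have part2: "(\<forall>x\<in>tree_vertices m. u x > v x) \<or> (\<forall>x\<in>tree_vertices m. u x = v x)" if bp: "\<beta> > 0"
  proof (cases "\<forall>x\<in>tree_vertices m. u x > v x")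
    case True thus ?thesis by simp
  next
    case False
    then obtain x0 where x0: "x0 \<in> tree_vertices m" "w x0 = 0"
      using part1 unfolding w_def by force
    have children: "\<forall>i<m. w (x @ [i]) = 0" and par: "x \<noteq> [] \<longrightarrow> w (butlast x) = 0"
      if "x \<in> tree_vertices m" "w x = 0" for x
    proof -
      have nonpos: "\<forall>i\<in>{..<m}. w (x @ [i]) \<le> 0" using part1 tv_app[OF that(1)] by blast
      have sle: "(\<Sum>i<m. w (x @ [i])) \<le> 0" by (rule sum_nonpos) (use nonpos in blast)
      have ple: "x \<noteq> [] \<longrightarrow> w (butlast x) \<le> 0" using part1 tv_butlast[OF that(1)] by blast
      have s0: "(\<Sum>i<m. w (x @ [i])) = 0 \<and> (x \<noteq> [] \<longrightarrow> w (butlast x) = 0)"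
      proof (cases "x = []")
        case True thus ?thesis using root that(2) sle by simp
      next
        case False
        have h: "0 \<le> \<beta> * w (butlast x) + ((1 - \<beta>) / real m) * (\<Sum>i<m. w (x @ [i]))"
          using nonroot[OF that(1) False] that(2) by simp
        have a: "\<beta> * w (butlast x) \<le> 0" using ple False bp by (simp add: mult_nonneg_nonpos)
        have b: "((1 - \<beta>) / real m) * (\<Sum>i<m. w (x @ [i])) \<le> 0"
          using sle b1 by (intro mult_nonneg_nonpos) auto
        have "\<beta> * w (butlast x) = 0" "((1 - \<beta>) / real m) * (\<Sum>i<m. w (x @ [i])) = 0"
          using a b h by linarith+
        thus ?thesis using bp b1 m0 False by auto
      qed
      have "\<forall>i\<in>{..<m}. - w (x @ [i]) = 0"
        using sum_nonneg_eq_0_iff[of "{..<m}" "\<lambda>i. - w (x @ [i])"] nonpos s0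
        by (simp add: sum_negf)
      thus "\<forall>i<m. w (x @ [i]) = 0" by simp
      show "x \<noteq> [] \<longrightarrow> w (butlast x) = 0" using s0 by simp
    qed
    have up: "w [] = 0" if "x \<in> tree_vertices m" "w x = 0" for x
      using that
    proof (induction x rule: rev_induct)
      case Nil thus ?case by simp
    next
      case (snoc a xs)
      have "w xs = 0" using par[OF snoc.prems] by simp
      moreover have "xs \<in> tree_vertices m" using snoc.prems by (auto simp: tree_vertices_def)
      ultimately show ?case using snoc.IH by simp
    qed
    have w0: "w [] = 0" using up x0 by blast
    have down: "w x = 0" if "x \<in> tree_vertices m" for x
      using that
    proof (induction x rule: rev_induct)
      case Nil thus ?case using w0 by simp
    next
      case (snoc a xs)
      have xs: "xs \<in> tree_vertices m" "a < m" using snoc.prems by (auto simp: tree_vertices_def)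
      thus ?case using children[of xs] snoc.IH by auto
    qed
    thus ?thesis unfolding w_def by auto
  qed
  show ?thesis using part1 part2 unfolding w_def by auto
qed

end
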